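(* Let $H$ be a group which is the union of finitely many subsets $S_1,\dots,S_n$: $H=\bigcup_{i=1}^n S_i$. For each $i$ set $C_i:=\langle ab^{-1}\mid a,b\in S_i\rangle$. Then at least one of the subgroups $C_1,\dots,C_n$ has index at most $n$ in $H$. *)

theory Defs
  imports "HOL-Algebra.Algebra"
begin

end

theory Submission
  imports Defs
begin

definition tup :: "('a,'b) monoid_scheme \<Rightarrow> 'a set set \<Rightarrow> 'a \<Rightarrow> 'a set \<Rightarrow> 'a set" where
  "tup G F z = (\<lambda>H\<in>F. H #>\<^bsub>G\<^esub> z)"

context group
begin

lemma rcos_elim:
  assumes "y \<in> H #> g"
  obtains a where "a \<in> H" "y = a \<otimes> g"
  using assms unfolding r_coset_def by auto

lemma no_infinite_cover:
  assumes "finite P" "\<forall>p\<in>P. subgroup (fst p) G \<and> infinite (rcosets (fst p)) \<and> snd p \<in> carrier G"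
  shows "\<not> carrier G \<subseteq> (\<Union>p\<in>P. fst p #> snd p)"
  using assms
proof (induction "card (fst ` P)" arbitrary: P rule: less_induct)
  case less
  show ?case
  proof
    assume cov: "carrier G \<subseteq> (\<Union>p\<in>P. fst p #> snd p)"
    have "\<one> \<in> (\<Union>p\<in>P. fst p #> snd p)" using cov one_closed by blast
    then obtain H h0 where Hh0: "(H,h0) \<in> P" by (metis UN_E prod.collapse)
    have "subgroup (fst (H,h0)) G \<and> infinite (rcosets (fst (H,h0)))" using less.prems(2) Hh0 by blast
    hence sH: "subgroup H G" and infH: "infinite (rcosets H)" by simp_all
    have HG: "H \<subseteq> carrier G" using sH subgroup.subset by blast
    let ?Q = "(\<lambda>p. H #> snd p) ` {p\<in>P. fst p = H}"
    have "finite ?Q" by (intro finite_imageI) (use less.prems(1) in simp)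
    hence "\<not> rcosets H \<subseteq> ?Q" using infH finite_subset by blast
    then obtain c where "c \<in> rcosets H" "c \<notin> ?Q" by blast
    then obtain x where x: "x \<in> carrier G" "c = H #> x" and cQ: "H #> x \<notin> ?Q"
      unfolding RCOSETS_def by auto
    define P' where "P' = (\<lambda>(p,q). (fst p, snd p \<otimes> inv x \<otimes> snd q)) ` {(p,q). p \<in> P \<and> q \<in> P \<and> fst p \<noteq> H \<and> fst q = H}
       \<union> {p\<in>P. fst p \<noteq> H}"
    have "finite {(p,q). p \<in> P \<and> q \<in> P \<and> fst p \<noteq> H \<and> fst q = H}"
      by (rule finite_subset[of _ "P \<times> P"]) (use less.prems(1) in blast)+
    hence finP': "finite P'" unfolding P'_def using less.prems(1) by simp
    have sub: "fst ` P' \<subseteq> fst ` P - {H}"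
    proof
      fix K assume "K \<in> fst ` P'"
      then obtain p where p: "p \<in> P'" "K = fst p" by blast
      show "K \<in> fst ` P - {H}"
        using p(1) unfolding P'_def
      proof
        assume "p \<in> (\<lambda>(p,q). (fst p, snd p \<otimes> inv x \<otimes> snd q)) ` {(p,q). p \<in> P \<and> q \<in> P \<and> fst p \<noteq> H \<and> fst q = H}"
        then obtain pq where pq: "pq \<in> {(p,q). p \<in> P \<and> q \<in> P \<and> fst p \<noteq> H \<and> fst q = H}"
          and pe: "p = (\<lambda>(p,q). (fst p, snd p \<otimes> inv x \<otimes> snd q)) pq" by (rule imageE)
        obtain a b where pqab: "pq = (a,b)" by (cases pq)
        have ab: "a \<in> P" "fst a \<noteq> H" "p = (fst a, snd a \<otimes> inv x \<otimes> snd b)"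
          using pq pe unfolding pqab by simp_all
        hence "K = fst a" using p(2) by simp
        thus ?thesis using ab by blast
      next
        assume "p \<in> {p\<in>P. fst p \<noteq> H}"
        thus ?thesis using p(2) by blast
      qed
    qed
    have HP: "H \<in> fst ` P" using Hh0 by (metis fst_conv image_eqI)
    have nH: "H \<notin> fst ` P'" using sub by blast
    have ps: "fst ` P' \<subset> fst ` P"
    proof (rule psubsetI)
      show "fst ` P' \<subseteq> fst ` P" using sub by (rule subset_trans) blast
      show "fst ` P' \<noteq> fst ` P" using nH HP by metis
    qed
    have fp: "finite (fst ` P)" using less.prems(1) by (rule finite_imageI)
    have lt: "card (fst ` P') < card (fst ` P)"
      by (rule psubset_card_mono[OF fp ps])
    have props: "\<forall>p\<in>P'. subgroup (fst p) G \<and> infinite (rcosets (fst p)) \<and> snd p \<in> carrier G"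
    proof
      fix q assume "q \<in> P'"
      thus "subgroup (fst q) G \<and> infinite (rcosets (fst q)) \<and> snd q \<in> carrier G"
        unfolding P'_def
      proof
        assume "q \<in> (\<lambda>(p,q). (fst p, snd p \<otimes> inv x \<otimes> snd q)) ` {(p,q). p \<in> P \<and> q \<in> P \<and> fst p \<noteq> H \<and> fst q = H}"
        then obtain pq where pq: "pq \<in> {(p,q). p \<in> P \<and> q \<in> P \<and> fst p \<noteq> H \<and> fst q = H}"
          and pe: "q = (\<lambda>(p,q). (fst p, snd p \<otimes> inv x \<otimes> snd q)) pq" by (rule imageE)
        obtain a b where pqab: "pq = (a,b)" by (cases pq)
        have ab: "a \<in> P" "b \<in> P" "q = (fst a, snd a \<otimes> inv x \<otimes> snd b)"
          using pq pe unfolding pqab by simp_all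
        have "subgroup (fst a) G \<and> infinite (rcosets (fst a)) \<and> snd a \<in> carrier G"
          "snd b \<in> carrier G" using ab less.prems(2) by blast+
        thus ?thesis using ab(3) x by simp
      next
        assume "q \<in> {p\<in>P. fst p \<noteq> H}"
        thus ?thesis using less.prems(2) by blast
      qed
    qed
    have cov': "carrier G \<subseteq> (\<Union>p\<in>P'. fst p #> snd p)"
    proof
      fix y assume y: "y \<in> carrier G"
      then obtain p where p: "p \<in> P" "y \<in> fst p #> snd p" using cov by auto
      show "y \<in> (\<Union>p\<in>P'. fst p #> snd p)"
      proof (cases "fst p = H")
        case False
        hence "p \<in> P'" unfolding P'_def using p by blast
        then show ?thesis using p(2) by blast
      next
        case True
        obtain a where a: "a \<in> H" "y = a \<otimes> snd p" using p True rcos_elim by metis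
        have ac: "a \<in> carrier G" using a HG by auto
        have ax: "a \<otimes> x \<in> H #> x" using a HG x rcosI by auto
        have "a \<otimes> x \<in> carrier G" using ac x by auto
        then obtain q where q: "q \<in> P" "a \<otimes> x \<in> fst q #> snd q" using cov by auto
        have sq: "subgroup (fst q) G" "snd q \<in> carrier G" using q less.prems(2) by auto
        have qH: "fst q \<noteq> H"
        proof
          assume qh: "fst q = H"
          have "H #> x = H #> (a \<otimes> x)" using repr_independence[OF ax x(1) sH] .
          also have "\<dots> = H #> snd q" using repr_independence[OF _ sq(2) sH] q qh by metis
          finally show False using cQ q qh by auto
        qed
        obtain k where k: "k \<in> fst q" "a \<otimes> x = k \<otimes> snd q" using q rcos_elim by metis
        have kc: "k \<in> carrier G" using k sq subgroup.mem_carrier by metis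
        have pc: "snd p \<in> carrier G" using p less.prems(2) by auto
        have "y = k \<otimes> (snd q \<otimes> inv x \<otimes> snd p)"
        proof -
          have "a = k \<otimes> snd q \<otimes> inv x" using k(2) ac x kc sq
            by (metis inv_solve_right m_closed)
          thus ?thesis using a(2) kc sq x pc by (simp add: m_assoc)
        qed
        hence "y \<in> fst q #> (snd q \<otimes> inv x \<otimes> snd p)"
          using rcosI[OF k(1)] sq kc x pc subgroup.subset by (metis inv_closed m_closed)
        moreover have "(fst q, snd q \<otimes> inv x \<otimes> snd p) \<in> P'"
          unfolding P'_def using q p True qH by force
        ultimately show ?thesis by force
      qed
    qed
    show False using less.hyps[OF lt finP' props] cov' by blast
  qed
qed

lemma tup_fin:
  assumes "finite F" "\<forall>H\<in>F. subgroup H G \<and> finite (rcosets H)"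
  shows "finite (tup G F ` carrier G)"
proof (rule finite_subset)
  show "tup G F ` carrier G \<subseteq> PiE F (\<lambda>H. rcosets H)"
    using assms by (auto simp: tup_def intro!: rcosetsI subgroup.subset)
  show "finite (PiE F (\<lambda>H. rcosets H))" using assms by (intro finite_PiE) auto
qed

lemma tup_app: "H \<in> F \<Longrightarrow> tup G F z H = H #> z"
  by (simp add: tup_def)

lemma reduce_finite:
  assumes finP: "finite P" and Pp: "\<forall>p\<in>P. subgroup (fst p) G \<and> snd p \<in> carrier G"
    and cov: "carrier G \<subseteq> (\<Union>p\<in>P. fst p #> snd p)"
  shows "carrier G \<subseteq> (\<Union>p\<in>{p\<in>P. finite (rcosets (fst p))}. fst p #> snd p)"
proof
  fix y0 assume y0: "y0 \<in> carrier G"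
  define J where "J = {p\<in>P. finite (rcosets (fst p))}"
  show "y0 \<in> (\<Union>p\<in>{p\<in>P. finite (rcosets (fst p))}. fst p #> snd p)"
  proof (rule ccontr)
    assume ny: "y0 \<notin> (\<Union>p\<in>{p\<in>P. finite (rcosets (fst p))}. fst p #> snd p)"
    define F where "F = fst ` J"
    have Fprop: "\<forall>H\<in>F. subgroup H G \<and> finite (rcosets H)"
      unfolding F_def J_def using Pp by auto
    have finF: "finite F" unfolding F_def J_def using finP by auto
    define Xs where "Xs = tup G F ` carrier G"
    have finXs: "finite Xs" unfolding Xs_def using tup_fin finF Fprop by blast
    define R where "R = (\<lambda>t. SOME z. z \<in> carrier G \<and> tup G F z = t) ` Xs"
    have finR: "finite R" unfolding R_def using finXs by auto
    have Rrep: "\<exists>r\<in>R. r \<in> carrier G \<and> tup G F r = tup G F w" if w: "w \<in> carrier G" for w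
    proof -
      let ?r = "SOME z. z \<in> carrier G \<and> tup G F z = tup G F w"
      have "?r \<in> carrier G \<and> tup G F ?r = tup G F w"
        by (rule someI_ex) (use w in blast)
      moreover have "?r \<in> R" unfolding R_def Xs_def using w by blast
      ultimately show ?thesis by blast
    qed
    have Rc: "R \<subseteq> carrier G"
    proof
      fix r assume "r \<in> R"
      then obtain w where w: "w \<in> carrier G" "r = (SOME z. z \<in> carrier G \<and> tup G F z = tup G F w)"
        unfolding R_def Xs_def by auto
      have "(SOME z. z \<in> carrier G \<and> tup G F z = tup G F w) \<in> carrier G \<and> True"
        using someI_ex[of "\<lambda>z. z \<in> carrier G \<and> tup G F z = tup G F w"] w by blast
      thus "r \<in> carrier G" using w by simp
    qed
    have Yout: "z \<notin> fst p #> snd p" if z: "z \<in> carrier G" "tup G F z = tup G F y0" and p: "p \<in> J" for z p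
    proof
      assume zin: "z \<in> fst p #> snd p"
      have HF: "fst p \<in> F" unfolding F_def using p by auto
      have sp: "subgroup (fst p) G" "snd p \<in> carrier G" using p Pp unfolding J_def by auto
      have e1: "fst p #> snd p = fst p #> z" using repr_independence[OF zin sp(2) sp(1)] .
      have "fst p #> z = fst p #> y0" using z(2) tup_app[OF HF] by metis
      hence "y0 \<in> fst p #> snd p" using e1 rcos_self[OF y0 sp(1)] by simp
      thus False using ny p unfolding J_def by blast
    qed
    define P'' where "P'' = (\<lambda>(p,r). (fst p, snd p \<otimes> inv y0 \<otimes> r)) ` ((P - J) \<times> R)"
    have fin'': "finite P''" unfolding P''_def using finP finR by auto
    have props'': "\<forall>p\<in>P''. subgroup (fst p) G \<and> infinite (rcosets (fst p)) \<and> snd p \<in> carrier G"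
    proof
      fix q assume "q \<in> P''"
      then obtain p r where pr: "p \<in> P" "p \<notin> J" "r \<in> R" "q = (fst p, snd p \<otimes> inv y0 \<otimes> r)"
        unfolding P''_def by auto
      have "r \<in> carrier G" using pr Rc by auto
      thus "subgroup (fst q) G \<and> infinite (rcosets (fst q)) \<and> snd q \<in> carrier G"
        using pr Pp y0 unfolding J_def by auto
    qed
    have cov'': "carrier G \<subseteq> (\<Union>p\<in>P''. fst p #> snd p)"
    proof
      fix w assume w: "w \<in> carrier G"
      obtain r where r: "r \<in> R" "r \<in> carrier G" "tup G F r = tup G F w" using Rrep[OF w] by blast
      define z where "z = w \<otimes> inv r \<otimes> y0"
      have zc: "z \<in> carrier G" unfolding z_def using w r y0 by auto
      have tz: "tup G F z = tup G F y0"
        unfolding tup_def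
      proof (rule restrict_ext)
        fix H assume HF: "H \<in> F"
        have HG: "H \<subseteq> carrier G" using Fprop HF subgroup.subset by blast
        have "H #> w = H #> r" using r(3) tup_app[OF HF] by metis
        have "H #> z = ((H #> w) #> inv r) #> y0"
          unfolding z_def using HG w r y0 by (simp add: coset_mult_assoc)
        also have "\<dots> = ((H #> r) #> inv r) #> y0" using \<open>H #> w = H #> r\<close> by simp
        also have "\<dots> = H #> y0" using HG r y0 by (simp add: coset_mult_assoc)
        finally show "H #> z = H #> y0" .
      qed
      obtain p where p: "p \<in> P" "z \<in> fst p #> snd p" using cov zc by auto
      have pJ: "p \<notin> J" using Yout[OF zc tz] p(2) by blast
      have sp: "subgroup (fst p) G" "snd p \<in> carrier G" using p Pp by auto
      obtain k where k: "k \<in> fst p" "z = k \<otimes> snd p" using p rcos_elim by metis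
      have kc: "k \<in> carrier G" using k sp subgroup.mem_carrier by metis
      have "w = z \<otimes> inv y0 \<otimes> r" unfolding z_def using w r y0 by (simp add: m_assoc)
      also have "\<dots> = k \<otimes> (snd p \<otimes> inv y0 \<otimes> r)" using k kc sp y0 r by (simp add: m_assoc)
      finally have "w \<in> fst p #> (snd p \<otimes> inv y0 \<otimes> r)"
        using rcosI[OF k(1)] sp y0 r subgroup.subset by (metis inv_closed m_closed)
      moreover have "(fst p, snd p \<otimes> inv y0 \<otimes> r) \<in> P''"
        unfolding P''_def using p pJ r by force
      ultimately show "w \<in> (\<Union>p\<in>P''. fst p #> snd p)" by force
    qed
    show False using no_infinite_cover[OF fin'' props''] cov'' by blast
  qed
qed

lemma count_bound:
  assumes finJ: "finite J" and Jp: "\<forall>p\<in>J. subgroup (fst p) G \<and> finite (rcosets (fst p)) \<and> snd p \<in> carrier G"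
    and cov: "carrier G \<subseteq> (\<Union>p\<in>J. fst p #> snd p)"
  shows "\<exists>p\<in>J. card (rcosets (fst p)) \<le> card J"
proof (rule ccontr)
  assume "\<not> ?thesis"
  hence big: "\<forall>p\<in>J. card J < card (rcosets (fst p))" by auto
  define F where "F = fst ` J"
  have Fprop: "\<forall>H\<in>F. subgroup H G \<and> finite (rcosets H)"
    unfolding F_def using Jp by auto
  have finF: "finite F" unfolding F_def using finJ by auto
  define Xs where "Xs = tup G F ` carrier G"
  have finXs: "finite Xs" unfolding Xs_def using tup_fin finF Fprop by blast
  have Xsne: "Xs \<noteq> {}" unfolding Xs_def by auto
  define fib where "fib H c = {t\<in>Xs. t H = c}" for H c
  have finfib: "finite (fib H c)" for H c unfolding fib_def using finXs by auto
  define sh where "sh g t = (\<lambda>K\<in>F. t K #> g)" for g t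
  have shtup: "sh g (tup G F z) = tup G F (z \<otimes> g)" if "z \<in> carrier G" "g \<in> carrier G" for g z
    unfolding sh_def tup_def
  proof (rule restrict_ext)
    fix K assume "K \<in> F"
    hence "K \<subseteq> carrier G" using Fprop subgroup.subset by blast
    thus "restrict (\<lambda>H. H #> z) F K #> g = K #> (z \<otimes> g)"
      using \<open>K \<in> F\<close> that by (simp add: coset_mult_assoc)
  qed
  have key: "card (fib H (H #> g)) = card (fib H H)" if HF: "H \<in> F" and g: "g \<in> carrier G" for H g
  proof -
    have HG: "H \<subseteq> carrier G" using Fprop HF subgroup.subset by blast
    have sH: "subgroup H G" using Fprop HF by blast
    have inj: "inj_on (sh g) Xs"
    proof
      fix t t' assume t: "t \<in> Xs" and t': "t' \<in> Xs" and e: "sh g t = sh g t'"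
      obtain z where z: "z \<in> carrier G" "t = tup G F z" using t unfolding Xs_def by auto
      obtain z' where z': "z' \<in> carrier G" "t' = tup G F z'" using t' unfolding Xs_def by auto
      show "t = t'" unfolding z z' tup_def
      proof (rule restrict_ext)
        fix K assume KF: "K \<in> F"
        have KG: "K \<subseteq> carrier G" using Fprop KF subgroup.subset by blast
        have "sh g t K = sh g t' K" using e by simp
        hence "(K #> z) #> g = (K #> z') #> g" using KF unfolding sh_def z z' tup_def by simp
        hence "((K #> z) #> g) #> inv g = ((K #> z') #> g) #> inv g" by simp
        thus "K #> z = K #> z'" using KG z z' g by (simp add: coset_mult_assoc m_assoc)
      qed
    qed
    have eq: "fib H (H #> g) = sh g ` fib H H"
    proof
      show "sh g ` fib H H \<subseteq> fib H (H #> g)"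
      proof
        fix s assume "s \<in> sh g ` fib H H"
        then obtain t where t: "t \<in> Xs" "t H = H" "s = sh g t" unfolding fib_def by auto
        obtain z where z: "z \<in> carrier G" "t = tup G F z" using t unfolding Xs_def by auto
        have "s = tup G F (z \<otimes> g)" using t z shtup g by simp
        moreover have "H #> (z \<otimes> g) = H #> g"
          using t(2) z HG g HF by (simp add: tup_app coset_mult_assoc[symmetric])
        ultimately show "s \<in> fib H (H #> g)" unfolding fib_def Xs_def using z g HF
          by (auto simp: tup_app)
      qed
      show "fib H (H #> g) \<subseteq> sh g ` fib H H"
      proof
        fix s assume "s \<in> fib H (H #> g)"
        then obtain w where w: "w \<in> carrier G" "s = tup G F w" "H #> w = H #> g"
          unfolding fib_def Xs_def using HF by (auto simp: tup_app)
        define z where "z = w \<otimes> inv g"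
        have zc: "z \<in> carrier G" unfolding z_def using w g by auto
        have "H #> z = (H #> w) #> inv g" unfolding z_def using HG w(1) g by (simp add: coset_mult_assoc)
        also have "\<dots> = H" using w(3) HG g by (metis coset_mult_assoc coset_mult_one r_inv inv_closed)
        finally have Hz: "H #> z = H" .
        have "tup G F z \<in> fib H H" unfolding fib_def Xs_def using zc Hz HF by (auto simp: tup_app)
        moreover have "sh g (tup G F z) = s" using shtup[OF zc g] w unfolding z_def
          using g by (simp add: m_assoc)
        ultimately show "s \<in> sh g ` fib H H" by force
      qed
    qed
    have "fib H H \<subseteq> Xs" unfolding fib_def by auto
    hence "inj_on (sh g) (fib H H)" using inj inj_on_subset by blast
    thus ?thesis using eq card_image by metis
  qed
  have a: "card (rcosets H) * card (fib H H) \<le> card Xs" if HF: "H \<in> F" for H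
  proof -
    have fr: "finite (rcosets H)" using Fprop HF by blast
    have "card (\<Union>c\<in>rcosets H. fib H c) = (\<Sum>c\<in>rcosets H. card (fib H c))"
      by (rule card_UN_disjoint) (use fr finfib in \<open>auto simp: fib_def\<close>)
    also have "\<dots> = (\<Sum>c\<in>rcosets H. card (fib H H))"
    proof (rule sum.cong)
      fix c assume "c \<in> rcosets H"
      then obtain g where "g \<in> carrier G" "c = H #> g" unfolding RCOSETS_def by auto
      thus "card (fib H c) = card (fib H H)" using key HF by simp
    qed simp
    also have "\<dots> = card (rcosets H) * card (fib H H)" by simp
    finally have e: "card (\<Union>c\<in>rcosets H. fib H c) = card (rcosets H) * card (fib H H)" .
    have "(\<Union>c\<in>rcosets H. fib H c) \<subseteq> Xs" unfolding fib_def by auto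
    hence "card (\<Union>c\<in>rcosets H. fib H c) \<le> card Xs" using finXs card_mono by blast
    thus ?thesis using e by simp
  qed
  have b: "card Xs \<le> (\<Sum>p\<in>J. card (fib (fst p) (fst p)))"
  proof -
    have "Xs \<subseteq> (\<Union>p\<in>J. fib (fst p) (fst p #> snd p))"
    proof
      fix t assume "t \<in> Xs"
      then obtain z where z: "z \<in> carrier G" "t = tup G F z" unfolding Xs_def by auto
      then obtain p where p: "p \<in> J" "z \<in> fst p #> snd p" using cov by auto
      have sp: "subgroup (fst p) G" "snd p \<in> carrier G" using p Jp by auto
      have HF: "fst p \<in> F" unfolding F_def using p by auto
      have "t (fst p) = fst p #> snd p"
        using repr_independence[OF p(2) sp(2) sp(1)] z HF by (simp add: tup_app)
      thus "t \<in> (\<Union>p\<in>J. fib (fst p) (fst p #> snd p))" using p \<open>t \<in> Xs\<close> unfolding fib_def by auto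
    qed
    hence "card Xs \<le> card (\<Union>p\<in>J. fib (fst p) (fst p #> snd p))"
      using finJ finfib by (intro card_mono) auto
    also have "\<dots> \<le> (\<Sum>p\<in>J. card (fib (fst p) (fst p #> snd p)))"
      using finJ by (rule card_UN_le)
    also have "\<dots> = (\<Sum>p\<in>J. card (fib (fst p) (fst p)))"
    proof (rule sum.cong)
      fix p assume p: "p \<in> J"
      have HF: "fst p \<in> F" unfolding F_def using p by auto
      show "card (fib (fst p) (fst p #> snd p)) = card (fib (fst p) (fst p))"
        using key[OF HF] p Jp by auto
    qed simp
    finally show ?thesis .
  qed
  define m where "m = card J"
  have c: "(m + 1) * card (fib (fst p) (fst p)) \<le> card Xs" if p: "p \<in> J" for p
  proof -
    have HF: "fst p \<in> F" unfolding F_def using p by auto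
    have "m + 1 \<le> card (rcosets (fst p))" using big p unfolding m_def by auto
    hence "(m + 1) * card (fib (fst p) (fst p)) \<le> card (rcosets (fst p)) * card (fib (fst p) (fst p))"
      by (rule mult_right_mono) simp
    also have "\<dots> \<le> card Xs" using a[OF HF] .
    finally show ?thesis .
  qed
  have "(m + 1) * card Xs \<le> (m + 1) * (\<Sum>p\<in>J. card (fib (fst p) (fst p)))"
    using b by (rule mult_left_mono) simp
  also have "\<dots> = (\<Sum>p\<in>J. (m + 1) * card (fib (fst p) (fst p)))" by (simp add: sum_distrib_left)
  also have "\<dots> \<le> (\<Sum>p\<in>J. card Xs)" by (rule sum_mono) (use c in auto)
  also have "\<dots> = m * card Xs" unfolding m_def by simp
  finally have "card Xs = 0" by simp
  thus False using finXs Xsne by simp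
qed

end

theorem corollary2p3:
  fixes G (structure) and S :: "nat \<Rightarrow> 'a set" and n :: nat
  assumes "group G"
    and "carrier G = (\<Union>i\<in>{1..n}. S i)"
  shows "\<exists>i\<in>{1..n}.
           finite (rcosets (generate G {a \<otimes> inv b | a b. a \<in> S i \<and> b \<in> S i}))
         \<and> card (rcosets (generate G {a \<otimes> inv b | a b. a \<in> S i \<and> b \<in> S i})) \<le> n"
proof -
  interpret group G by fact
  define C where "C i = generate G {a \<otimes> inv b | a b. a \<in> S i \<and> b \<in> S i}" for i
  define I where "I = {i\<in>{1..n}. S i \<noteq> {}}"
  define g where "g i = (SOME x. x \<in> S i)" for i
  define P where "P = (\<lambda>i. (C i, g i)) ` I"
  have Sc: "S i \<subseteq> carrier G" if "i \<in> {1..n}" for i using assms(2) that by blast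
  have gS: "g i \<in> S i" if "i \<in> I" for i
    using that unfolding I_def g_def by (auto intro: someI)
  have Csub: "subgroup (C i) G" if "i \<in> {1..n}" for i
    unfolding C_def by (rule generate_is_subgroup) (use Sc[OF that] in auto)
  have finI: "finite I" unfolding I_def by auto
  have finP: "finite P" unfolding P_def using finI by auto
  have Pp: "\<forall>p\<in>P. subgroup (fst p) G \<and> snd p \<in> carrier G"
    unfolding P_def using Csub gS Sc unfolding I_def by auto
  have cov: "carrier G \<subseteq> (\<Union>p\<in>P. fst p #> snd p)"
  proof
    fix x assume x: "x \<in> carrier G"
    then obtain i where i: "i \<in> {1..n}" "x \<in> S i" using assms(2) by auto
    hence iI: "i \<in> I" unfolding I_def by auto
    have gi: "g i \<in> S i" "g i \<in> carrier G" using gS[OF iI] Sc[OF i(1)] by auto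
    have "x \<otimes> inv (g i) \<in> C i" unfolding C_def using i gi by (auto intro: generate.incl)
    hence "(x \<otimes> inv (g i)) \<otimes> g i \<in> C i #> g i"
      using rcosI Csub[OF i(1)] subgroup.subset gi by metis
    hence "x \<in> C i #> g i" using x gi by (simp add: m_assoc)
    thus "x \<in> (\<Union>p\<in>P. fst p #> snd p)" unfolding P_def using iI by force
  qed
  define J where "J = {p\<in>P. finite (rcosets (fst p))}"
  have finJ: "finite J" unfolding J_def using finP by auto
  have Jp: "\<forall>p\<in>J. subgroup (fst p) G \<and> finite (rcosets (fst p)) \<and> snd p \<in> carrier G"
    unfolding J_def using Pp by auto
  have covJ: "carrier G \<subseteq> (\<Union>p\<in>J. fst p #> snd p)"
    unfolding J_def using reduce_finite[OF finP Pp cov] .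
  obtain p where p: "p \<in> J" "card (rcosets (fst p)) \<le> card J"
    using count_bound[OF finJ Jp covJ] by blast
  have "card J \<le> card P" unfolding J_def using finP by (intro card_mono) auto
  also have "\<dots> \<le> card I" unfolding P_def using finI card_image_le by blast
  also have "\<dots> \<le> card {1..n}" unfolding I_def by (intro card_mono) auto
  finally have Jn: "card J \<le> n" by simp
  obtain i where i: "i \<in> I" "p = (C i, g i)" using p(1) unfolding J_def P_def by auto
  show ?thesis
    using i p Jn unfolding J_def C_def I_def by (intro bexI[of _ i]) auto
qed

end
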